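(* Let $\Gamma=([n],E)$ be a connected simple graph and $m$ a positive integer. Then the polytopes $$Q_{\Gamma,m}=\sum_{\substack{S\subseteq[n],\,|S|\le m+1\\ \Gamma|_S\text{ connected}}}\Delta_S\qquad\text{and}\qquad Q^L_{\Gamma,m}=\sum_{\substack{S\subseteq[n],\,|S|\le m+1\\ \Gamma|_S\cong L_{|S|}}}\Delta_S$$ are normally equivalent, i.e. their normal fans coincide.
   Context: $L_r$ is the path graph on $r$ vertices and $\Gamma|_S$ is the induced subgraph on $S$; the sums are Minkowski sums over nonempty subsets $S$. For nonempty $S\subseteq[n]$, $\Delta_S=\mathrm{conv}\{e_s:s\in S\}\subset\mathbb{R}^n$, where $e_s$ are the standard basis vectors. *)

theory Defs
  imports "HOL-Analysis.Analysis"
begin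

definition simple_graph :: "('n \<Rightarrow> 'n \<Rightarrow> bool) \<Rightarrow> bool" where
  "simple_graph E \<longleftrightarrow> (\<forall>x y. E x y \<longrightarrow> E y x) \<and> (\<forall>x. \<not> E x x)"

definition induced_connected :: "('n \<Rightarrow> 'n \<Rightarrow> bool) \<Rightarrow> 'n set \<Rightarrow> bool" where
  "induced_connected E S \<longleftrightarrow> S \<noteq> {} \<and>
     (\<forall>x\<in>S. \<forall>y\<in>S. (x, y) \<in> {(u, v). u \<in> S \<and> v \<in> S \<and> E u v}\<^sup>*)"

definition graph_connected :: "('n \<Rightarrow> 'n \<Rightarrow> bool) \<Rightarrow> bool" where
  "graph_connected E \<longleftrightarrow> induced_connected E UNIV"

definition path_edge :: "nat \<Rightarrow> nat \<Rightarrow> bool" where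
  "path_edge i j \<longleftrightarrow> i + 1 = j \<or> j + 1 = i"

definition induced_iso_path :: "('n \<Rightarrow> 'n \<Rightarrow> bool) \<Rightarrow> 'n set \<Rightarrow> bool" where
  "induced_iso_path E S \<longleftrightarrow> (\<exists>f. bij_betw f {0..<card S} S \<and>
     (\<forall>i<card S. \<forall>j<card S. E (f i) (f j) \<longleftrightarrow> path_edge i j))"

definition simplex_of :: "'n::finite set \<Rightarrow> (real ^ 'n) set" where
  "simplex_of S = convex hull ((\<lambda>s. axis s 1) ` S)"

definition minkowski_sum :: "'i set \<Rightarrow> ('i \<Rightarrow> 'a::comm_monoid_add set) \<Rightarrow> 'a set" where
  "minkowski_sum I P = {(\<Sum>i\<in>I. x i) | x. \<forall>i\<in>I. x i \<in> P i}"

definition normal_cone :: "'a::euclidean_space set \<Rightarrow> 'a set \<Rightarrow> 'a set" where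
  "normal_cone P F = {w. \<forall>x\<in>F. \<forall>y\<in>P. inner w y \<le> inner w x}"

definition normal_fan :: "'a::euclidean_space set \<Rightarrow> 'a set set" where
  "normal_fan P = {normal_cone P F | F. F face_of P \<and> F \<noteq> {}}"

definition Q_conn :: "('n::finite \<Rightarrow> 'n \<Rightarrow> bool) \<Rightarrow> nat \<Rightarrow> (real ^ 'n) set" where
  "Q_conn E m = minkowski_sum {S. S \<noteq> {} \<and> card S \<le> m + 1 \<and> induced_connected E S} simplex_of"

definition Q_path :: "('n::finite \<Rightarrow> 'n \<Rightarrow> bool) \<Rightarrow> nat \<Rightarrow> (real ^ 'n) set" where
  "Q_path E m = minkowski_sum {S. S \<noteq> {} \<and> card S \<le> m + 1 \<and> induced_iso_path E S} simplex_of"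

end

theory Submission
  imports Defs
begin

definition mx :: "(real ^ 'n::finite) set \<Rightarrow> real ^ 'n \<Rightarrow> (real ^ 'n) set" where
  "mx P w = {x\<in>P. \<forall>y\<in>P. inner w y \<le> inner w x}"

definition hasmax :: "(real ^ 'n::finite) set \<Rightarrow> bool" where
  "hasmax P \<longleftrightarrow> (\<forall>w. \<exists>c\<in>P. \<forall>y\<in>P. inner w y \<le> inner w c)"

lemma fan_char:
  fixes P :: "(real ^ 'n::finite) set"
  assumes pol: "polytope P" and hm: "hasmax P"
  shows "normal_fan P = range (\<lambda>w. {w'. mx P w \<subseteq> mx P w'})"
proof -
  have nc: "normal_cone P (mx P w) = {w'. mx P w \<subseteq> mx P w'}" for w
    unfolding normal_cone_def mx_def by auto
  have A: "\<exists>w. F = mx P w" if F: "F face_of P" "F \<noteq> {}" for F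
  proof -
    have "F exposed_face_of P"
      using F exposed_face_of_polyhedron[OF polytope_imp_polyhedron[OF pol]] by blast
    then obtain a b where ab: "P \<subseteq> {x. a \<bullet> x \<le> b}" "F = P \<inter> {x. a \<bullet> x = b}"
      unfolding exposed_face_of_def by blast
    obtain z where z: "z \<in> F" using F by blast
    have "F = mx P a"
    proof
      show "F \<subseteq> mx P a" using ab unfolding mx_def by (auto simp: inner_commute)
      show "mx P a \<subseteq> F"
      proof
        fix x assume x: "x \<in> mx P a"
        have "a \<bullet> z = b" "z \<in> P" using z ab by auto
        with x have "b \<le> a \<bullet> x" unfolding mx_def by auto
        moreover have "a \<bullet> x \<le> b" using x ab unfolding mx_def by auto
        ultimately show "x \<in> F" using x ab unfolding mx_def by auto
      qed
    qed
    then show ?thesis by blast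
  qed
  have B: "mx P w face_of P \<and> mx P w \<noteq> {}" for w
  proof -
    obtain c where c: "c \<in> P" "\<forall>y\<in>P. inner w y \<le> inner w c" using hm unfolding hasmax_def by blast
    have eq: "mx P w = P \<inter> {x. w \<bullet> x = w \<bullet> c}"
      using c unfolding mx_def by (auto intro: order.antisym)
    have "P \<inter> {x. w \<bullet> x = w \<bullet> c} face_of P"
      by (rule face_of_Int_supporting_hyperplane_le) (use c polytope_imp_convex[OF pol] in auto)
    moreover have "c \<in> mx P w" using c unfolding mx_def by auto
    ultimately show ?thesis using eq by auto
  qed
  show ?thesis
    unfolding normal_fan_def
  proof (intro set_eqI iffI)
    fix C assume "C \<in> {normal_cone P F |F. F face_of P \<and> F \<noteq> {}}"
    then obtain F where "C = normal_cone P F" "F face_of P" "F \<noteq> {}" by blast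
    then show "C \<in> range (\<lambda>w. {w'. mx P w \<subseteq> mx P w'})" using A nc by blast
  next
    fix C assume "C \<in> range (\<lambda>w. {w'. mx P w \<subseteq> mx P w'})"
    then obtain w where "C = {w'. mx P w \<subseteq> mx P w'}" by blast
    then show "C \<in> {normal_cone P F |F. F face_of P \<and> F \<noteq> {}}" using B nc by blast
  qed
qed

lemma msum_key:
  fixes P :: "'i \<Rightarrow> (real ^ 'n::finite) set"
  assumes fin: "finite I" and hm: "\<forall>i\<in>I. hasmax (P i)" and x: "\<forall>i\<in>I. x i \<in> P i"
  shows "(\<Sum>i\<in>I. x i) \<in> mx (minkowski_sum I P) w \<longleftrightarrow> (\<forall>i\<in>I. x i \<in> mx (P i) w)"
proof
  assume H: "\<forall>i\<in>I. x i \<in> mx (P i) w"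
  show "(\<Sum>i\<in>I. x i) \<in> mx (minkowski_sum I P) w"
    unfolding mx_def minkowski_sum_def
  proof (safe)
    show "\<exists>xa. (\<Sum>i\<in>I. x i) = sum xa I \<and> (\<forall>i\<in>I. xa i \<in> P i)" using x by blast
    fix y assume "\<forall>i\<in>I. y i \<in> P i"
    then have "inner w (y i) \<le> inner w (x i)" if "i \<in> I" for i
      using H that unfolding mx_def by auto
    then show "inner w (sum y I) \<le> inner w (\<Sum>i\<in>I. x i)"
      by (simp add: inner_sum_right sum_mono)
  qed
next
  assume H: "(\<Sum>i\<in>I. x i) \<in> mx (minkowski_sum I P) w"
  show "\<forall>i\<in>I. x i \<in> mx (P i) w"
  proof (rule ballI, rule ccontr)
    fix j assume j: "j \<in> I" and nj: "x j \<notin> mx (P j) w"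
    then obtain y where y: "y \<in> P j" "inner w y > inner w (x j)"
      using x unfolding mx_def by force
    define sel where "sel = x(j := y)"
    have "sum sel I \<in> minkowski_sum I P"
      unfolding minkowski_sum_def sel_def using x y by auto
    then have le: "inner w (sum sel I) \<le> inner w (\<Sum>i\<in>I. x i)" using H unfolding mx_def by auto
    have "(\<Sum>i\<in>I. inner w (sel i) - inner w (x i)) = (\<Sum>i\<in>I. if i = j then inner w y - inner w (x j) else 0)"
      by (rule sum.cong) (auto simp: sel_def)
    also have "\<dots> = inner w y - inner w (x j)" using j fin by simp
    finally have "inner w (sum sel I) - inner w (\<Sum>i\<in>I. x i) = inner w y - inner w (x j)"
      by (simp add: inner_sum_right sum_subtractf)
    with le y show False by simp
  qed
qed

lemma msum_hasmax:
  fixes P :: "'i \<Rightarrow> (real ^ 'n::finite) set"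
  assumes fin: "finite I" and hm: "\<forall>i\<in>I. hasmax (P i)"
  shows "hasmax (minkowski_sum I P)"
  unfolding hasmax_def
proof
  fix w
  have "\<forall>i\<in>I. \<exists>c. c \<in> mx (P i) w" using hm unfolding hasmax_def mx_def by blast
  then obtain c where c: "\<forall>i\<in>I. c i \<in> mx (P i) w" by metis
  then have "(\<Sum>i\<in>I. c i) \<in> mx (minkowski_sum I P) w"
    using msum_key[OF fin hm, of c] unfolding mx_def by auto
  then show "\<exists>c\<in>minkowski_sum I P. \<forall>y\<in>minkowski_sum I P. inner w y \<le> inner w c"
    unfolding mx_def by blast
qed

lemma msum_mx:
  fixes P :: "'i \<Rightarrow> (real ^ 'n::finite) set"
  assumes fin: "finite I" and hm: "\<forall>i\<in>I. hasmax (P i)"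
  shows "mx (minkowski_sum I P) w \<subseteq> mx (minkowski_sum I P) w' \<longleftrightarrow> (\<forall>i\<in>I. mx (P i) w \<subseteq> mx (P i) w')"
proof
  assume H: "\<forall>i\<in>I. mx (P i) w \<subseteq> mx (P i) w'"
  show "mx (minkowski_sum I P) w \<subseteq> mx (minkowski_sum I P) w'"
  proof
    fix z assume z: "z \<in> mx (minkowski_sum I P) w"
    then obtain x where x: "z = (\<Sum>i\<in>I. x i)" "\<forall>i\<in>I. x i \<in> P i"
      unfolding mx_def minkowski_sum_def by blast
    then have "\<forall>i\<in>I. x i \<in> mx (P i) w" using msum_key[OF fin hm x(2)] z by simp
    then have "\<forall>i\<in>I. x i \<in> mx (P i) w'" using H by blast
    then show "z \<in> mx (minkowski_sum I P) w'" using msum_key[OF fin hm x(2)] x by simp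
  qed
next
  assume H: "mx (minkowski_sum I P) w \<subseteq> mx (minkowski_sum I P) w'"
  show "\<forall>i\<in>I. mx (P i) w \<subseteq> mx (P i) w'"
  proof (intro ballI subsetI)
    fix j z assume j: "j \<in> I" and z: "z \<in> mx (P j) w"
    have "\<forall>i\<in>I. \<exists>c. c \<in> mx (P i) w" using hm unfolding hasmax_def mx_def by blast
    then obtain c where c: "\<forall>i\<in>I. c i \<in> mx (P i) w" by metis
    define sel where "sel = c(j := z)"
    have sm: "\<forall>i\<in>I. sel i \<in> mx (P i) w" using c z by (simp add: sel_def)
    then have sP: "\<forall>i\<in>I. sel i \<in> P i" unfolding mx_def by blast
    have "(\<Sum>i\<in>I. sel i) \<in> mx (minkowski_sum I P) w" using msum_key[OF fin hm sP] sm by simp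
    then have "(\<Sum>i\<in>I. sel i) \<in> mx (minkowski_sum I P) w'" using H by blast
    then have "sel j \<in> mx (P j) w'" using msum_key[OF fin hm sP] j by simp
    then show "z \<in> mx (P j) w'" by (simp add: sel_def)
  qed
qed

lemma simplex_coords:
  fixes S :: "'n::finite set"
  assumes x: "x \<in> simplex_of S"
  shows "(\<forall>i. 0 \<le> x$i) \<and> (\<forall>i. i \<notin> S \<longrightarrow> x$i = 0) \<and> (\<Sum>i\<in>UNIV. x$i) = 1"
proof -
  let ?C = "{x :: real ^ 'n. (\<forall>i. 0 \<le> x$i) \<and> (\<forall>i. i \<notin> S \<longrightarrow> x$i = 0) \<and> (\<Sum>i\<in>UNIV. x$i) = 1}"
  have cv: "convex ?C"
  proof (rule convexI)
    fix a b :: "real ^ 'n" and u v :: real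
    assume a: "a \<in> ?C" and b: "b \<in> ?C" and uv0: "0 \<le> u" "0 \<le> v" "u + v = 1"
    then have uv: "0 \<le> u \<and> 0 \<le> v \<and> u + v = 1" by simp
    have "(\<Sum>i\<in>UNIV. (u *\<^sub>R a + v *\<^sub>R b)$i) = u * (\<Sum>i\<in>UNIV. a$i) + v * (\<Sum>i\<in>UNIV. b$i)"
      by (simp add: sum.distrib sum_distrib_left)
    then show "u *\<^sub>R a + v *\<^sub>R b \<in> ?C" using a b uv by auto
  qed
  have "(\<lambda>s. axis s 1) ` S \<subseteq> ?C"
  proof
    fix y assume "y \<in> (\<lambda>s. axis s (1::real)) ` S"
    then obtain s where s: "s \<in> S" "y = axis s 1" by blast
    have "(\<Sum>i\<in>UNIV. y$i) = 1" using s by (simp add: axis_def)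
    then show "y \<in> ?C" using s by (auto simp: axis_def)
  qed
  then have "simplex_of S \<subseteq> ?C" unfolding simplex_of_def using cv by (rule hull_minimal)
  then show ?thesis using x by blast
qed

lemma axis_in_simplex: "s \<in> S \<Longrightarrow> axis s 1 \<in> simplex_of S"
  unfolding simplex_of_def by (rule hull_inc) blast

lemma inner_vec_sum: "inner (w :: real ^ 'n::finite) x = (\<Sum>i\<in>UNIV. w$i * x$i)"
  by (simp add: inner_vec_def)

lemma simplex_val:
  fixes S :: "'n::finite set" and w :: "real ^ 'n"
  assumes S: "S \<noteq> {}" and x: "x \<in> simplex_of S"
  defines "M \<equiv> Max ((\<lambda>i. w$i) ` S)"
  shows "inner w x \<le> M \<and> (inner w x = M \<longleftrightarrow> (\<forall>i\<in>S. 0 < x$i \<longrightarrow> w$i = M))"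
proof -
  have fS: "finite S" by simp
  have co: "(\<forall>i. 0 \<le> x$i) \<and> (\<forall>i. i \<notin> S \<longrightarrow> x$i = 0) \<and> (\<Sum>i\<in>UNIV. x$i) = 1"
    using simplex_coords[OF x] .
  have wM: "w$i \<le> M" if "i \<in> S" for i unfolding M_def using that fS by simp
  have eq: "M - inner w x = (\<Sum>i\<in>UNIV. (M - w$i) * x$i)"
  proof -
    have "M = M * (\<Sum>i\<in>UNIV. x$i)" using co by simp
    then show ?thesis by (simp add: inner_vec_sum sum_distrib_left sum_subtractf left_diff_distrib)
  qed
  have nn: "0 \<le> (M - w$i) * x$i" for i
    using co wM[of i] by (cases "i \<in> S") auto
  have "0 \<le> M - inner w x" unfolding eq by (rule sum_nonneg) (use nn in auto)
  moreover have "(inner w x = M) \<longleftrightarrow> (\<forall>i\<in>S. 0 < x$i \<longrightarrow> w$i = M)"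
  proof -
    have "(inner w x = M) \<longleftrightarrow> (\<Sum>i\<in>UNIV. (M - w$i) * x$i) = 0" using eq by linarith
    also have "\<dots> \<longleftrightarrow> (\<forall>i\<in>UNIV. (M - w$i) * x$i = 0)"
      by (rule sum_nonneg_eq_0_iff) (use nn in auto)
    also have "\<dots> \<longleftrightarrow> (\<forall>i\<in>S. 0 < x$i \<longrightarrow> w$i = M)"
      proof (intro iffI ballI impI)
      fix i assume "\<forall>i\<in>UNIV. (M - w$i) * x$i = 0" "i \<in> S" "0 < x$i"
      then show "w$i = M" by (metis UNIV_I eq_iff_diff_eq_0 less_irrefl mult_eq_0_iff)
    next
      fix i :: 'n assume H: "\<forall>i\<in>S. 0 < x$i \<longrightarrow> w$i = M"
      show "(M - w$i) * x$i = 0"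
      proof (cases "i \<in> S")
        case True
        then show ?thesis using H co by (cases "x$i = 0") (auto simp: less_eq_real_def)
      next
        case False
        then show ?thesis using co by simp
      qed
    qed
    finally show ?thesis .
  qed
  ultimately show ?thesis by linarith
qed

lemma simplex_hasmax:
  fixes S :: "'n::finite set"
  assumes S: "S \<noteq> {}"
  shows "hasmax (simplex_of S)"
  unfolding hasmax_def
proof
  fix w :: "real ^ 'n"
  let ?M = "Max ((\<lambda>i. w$i) ` S)"
  have "Max ((\<lambda>i. w$i) ` S) \<in> (\<lambda>i. w$i) ` S" by (rule Max_in) (use S in auto)
  then obtain s where s: "s \<in> S" "w$s = ?M" by auto
  have "inner w (axis s 1) = w$s" by (simp add: inner_axis)
  then show "\<exists>c\<in>simplex_of S. \<forall>y\<in>simplex_of S. inner w y \<le> inner w c"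
    using simplex_val[OF S] axis_in_simplex[OF s(1)] s by metis
qed

lemma simplex_mx:
  fixes S :: "'n::finite set"
  assumes S: "S \<noteq> {}"
  shows "mx (simplex_of S) w \<subseteq> mx (simplex_of S) w' \<longleftrightarrow>
    (\<forall>s\<in>S. (\<forall>t\<in>S. w$t \<le> w$s) \<longrightarrow> (\<forall>t\<in>S. w'$t \<le> w'$s))"
proof -
  have fS: "finite S" by simp
  have ax: "inner v (axis s 1) = v$s" for v :: "real ^ 'n" and s by (simp add: inner_axis)
  have Mw: "(\<forall>t\<in>S. v$t \<le> v$s) \<longleftrightarrow> v$s = Max ((\<lambda>i. v$i) ` S)" if "s \<in> S" for v :: "real ^ 'n" and s
  proof
    assume "\<forall>t\<in>S. v$t \<le> v$s"
    then show "v$s = Max ((\<lambda>i. v$i) ` S)" using that fS S by (intro order.antisym) (simp_all add: Max_le_iff)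
  next
    assume "v$s = Max ((\<lambda>i. v$i) ` S)"
    then show "\<forall>t\<in>S. v$t \<le> v$s" using fS by simp
  qed
  have Mex: "\<exists>s\<in>S. v$s = Max ((\<lambda>i. v$i) ` S)" for v :: "real ^ 'n"
  proof -
    have "Max ((\<lambda>i. v$i) ` S) \<in> (\<lambda>i. v$i) ` S" by (rule Max_in) (use S in auto)
    then show ?thesis by auto
  qed
  have mxc: "mx (simplex_of S) v = {x \<in> simplex_of S. inner v x = Max ((\<lambda>i. v$i) ` S)}" for v
  proof -
    obtain s where s: "s \<in> S" "v$s = Max ((\<lambda>i. v$i) ` S)" using Mex by blast
    have sv: "\<And>y. y \<in> simplex_of S \<Longrightarrow> inner v y \<le> Max ((\<lambda>i. v$i) ` S)"
      using simplex_val[OF S, of _ v] by blast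
    have am: "axis s 1 \<in> simplex_of S" "inner v (axis s 1) = Max ((\<lambda>i. v$i) ` S)"
      using axis_in_simplex[OF s(1)] ax[of v s] s by auto
    show ?thesis unfolding mx_def
    proof (intro set_eqI iffI)
      fix x assume "x \<in> {x \<in> simplex_of S. \<forall>y\<in>simplex_of S. inner v y \<le> inner v x}"
      then have xs: "x \<in> simplex_of S" and xm: "\<forall>y\<in>simplex_of S. inner v y \<le> inner v x" by auto
      have "inner v (axis s 1) \<le> inner v x" using xm am(1) by blast
      then have "Max ((\<lambda>i. v$i) ` S) \<le> inner v x" using am(2) by simp
      then show "x \<in> {x \<in> simplex_of S. inner v x = Max ((\<lambda>i. v$i) ` S)}"
        using sv[OF xs] xs by simp
    next
      fix x assume "x \<in> {x \<in> simplex_of S. inner v x = Max ((\<lambda>i. v$i) ` S)}"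
      then show "x \<in> {x \<in> simplex_of S. \<forall>y\<in>simplex_of S. inner v y \<le> inner v x}"
        using sv by auto
    qed
  qed
  show ?thesis
  proof
    assume H: "mx (simplex_of S) w \<subseteq> mx (simplex_of S) w'"
    show "\<forall>s\<in>S. (\<forall>t\<in>S. w$t \<le> w$s) \<longrightarrow> (\<forall>t\<in>S. w'$t \<le> w'$s)"
    proof (rule ballI, rule impI)
      fix s assume s: "s \<in> S" "\<forall>t\<in>S. w$t \<le> w$s"
      then have "axis s 1 \<in> mx (simplex_of S) w"
        unfolding mxc using axis_in_simplex[OF s(1)] ax[of w s] Mw[OF s(1), of w] by simp
      then have "axis s 1 \<in> mx (simplex_of S) w'" using H by blast
      then show "\<forall>t\<in>S. w'$t \<le> w'$s"
        using ax[of w' s] Mw[OF s(1), of w'] by (simp add: mxc)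
    qed
  next
    assume H: "\<forall>s\<in>S. (\<forall>t\<in>S. w$t \<le> w$s) \<longrightarrow> (\<forall>t\<in>S. w'$t \<le> w'$s)"
    show "mx (simplex_of S) w \<subseteq> mx (simplex_of S) w'"
    proof
      fix x assume x: "x \<in> mx (simplex_of S) w"
      then have xS: "x \<in> simplex_of S" and xv: "inner w x = Max ((\<lambda>i. w$i) ` S)" unfolding mxc by auto
      have "\<forall>i\<in>S. 0 < x$i \<longrightarrow> w$i = Max ((\<lambda>i. w$i) ` S)" using simplex_val[OF S xS, of w] xv by simp
      then have "\<forall>i\<in>S. 0 < x$i \<longrightarrow> w'$i = Max ((\<lambda>i. w'$i) ` S)"
      proof (intro ballI impI)
        fix i assume A: "\<forall>i\<in>S. 0 < x$i \<longrightarrow> w$i = Max ((\<lambda>i. w$i) ` S)" "i \<in> S" "0 < x$i"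
        then have "\<forall>t\<in>S. w$t \<le> w$i" using Mw[OF A(2), of w] by simp
        then have "\<forall>t\<in>S. w'$t \<le> w'$i" using H A(2) by simp
        then show "w'$i = Max ((\<lambda>i. w'$i) ` S)" using Mw[OF A(2), of w'] by simp
      qed
      then have "inner w' x = Max ((\<lambda>i. w'$i) ` S)" using simplex_val[OF S xS, of w'] by simp
      then show "x \<in> mx (simplex_of S) w'" unfolding mxc using xS by simp
    qed
  qed
qed

lemma msum_polytope:
  fixes I :: "'n::finite set set"
  assumes fin: "finite I"
  shows "polytope (minkowski_sum I simplex_of)"
proof -
  have "minkowski_sum I simplex_of = sum simplex_of I"
    unfolding minkowski_sum_def using set_sum_alt[OF fin, of simplex_of] by simp
  also have "\<dots> = sum (\<lambda>S. convex hull ((\<lambda>s. axis s (1::real)) ` S)) I"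
    unfolding simplex_of_def ..
  also have "\<dots> = convex hull (sum (\<lambda>S. (\<lambda>s. axis s (1::real)) ` S) I)"
    by (rule convex_hull_set_sum[symmetric])
  finally have eq: "minkowski_sum I simplex_of = convex hull (sum (\<lambda>S. (\<lambda>s. axis s (1::real)) ` S) I)" .
  have "finite (sum (\<lambda>S. (\<lambda>s. axis s (1::real)) ` S) I :: (real ^ 'n) set)"
    by (rule finite_set_sum) simp
  then show ?thesis unfolding eq by (rule polytope_convex_hull)
qed

definition walk :: "('n \<Rightarrow> 'n \<Rightarrow> bool) \<Rightarrow> 'n set \<Rightarrow> (nat \<Rightarrow> 'n) \<Rightarrow> nat \<Rightarrow> bool" where
  "walk E S f k \<longleftrightarrow> (\<forall>i\<le>k. f i \<in> S) \<and> (\<forall>i<k. E (f i) (f (Suc i)))"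

lemma walk_exists:
  assumes "(s, t) \<in> {(u, v). u \<in> S \<and> v \<in> S \<and> E u v}\<^sup>*" and "s \<in> S"
  shows "\<exists>f k. walk E S f k \<and> f 0 = s \<and> f k = t"
  using assms(1)
proof (induction rule: rtrancl_induct)
  case base
  have "walk E S (\<lambda>_. s) 0" using assms(2) unfolding walk_def by simp
  then show ?case by blast
next
  case (step y z)
  then obtain f k where f: "walk E S f k" "f 0 = s" "f k = y" by blast
  define g where "g = f(Suc k := z)"
  have "walk E S g (Suc k)"
    using f step(2) unfolding walk_def g_def
    by (auto simp: le_Suc_eq less_Suc_eq)
  moreover have "g 0 = s" "g (Suc k) = z" using f by (auto simp: g_def)
  ultimately show ?case by blast
qed

lemma walk_shortcut:
  assumes w: "walk E S f k" and f0: "f 0 = s" and fk: "f k = t"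
    and d: "1 \<le> d" "i + d \<le> k"
    and e1: "i + d < k \<Longrightarrow> E (f i) (f (i + d + 1))"
    and e2: "i + d = k \<Longrightarrow> f i = f k"
  shows "\<exists>g. walk E S g (k - d) \<and> g 0 = s \<and> g (k - d) = t"
proof -
  define g where "g = (\<lambda>l. f (if l \<le> i then l else l + d))"
  have "walk E S g (k - d)"
    unfolding walk_def
  proof (intro conjI allI impI)
    fix l assume "l \<le> k - d"
    then show "g l \<in> S" using w d unfolding walk_def g_def by auto
  next
    fix l assume l: "l < k - d"
    consider "l < i" | "l = i" | "l > i" by linarith
    then show "E (g l) (g (Suc l))"
    proof cases
      case 1
      then show ?thesis using w l d unfolding walk_def g_def by auto
    next
      case 2
      then show ?thesis using e1 l d unfolding g_def by auto
    next
      case 3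
      then have "l + d < k" using l d by linarith
      then show ?thesis using w 3 unfolding walk_def g_def by auto
    qed
  qed
  moreover have "g 0 = s" using f0 unfolding g_def by simp
  moreover have "g (k - d) = t"
  proof (cases "k - d \<le> i")
    case True
    then have "i + d = k" using d by linarith
    then show ?thesis using e2 fk True unfolding g_def by auto
  next
    case False
    then show ?thesis using fk d unfolding g_def by auto
  qed
  ultimately show ?thesis by blast
qed

lemma induced_path_exists:
  assumes sg: "simple_graph E" and st: "(s, t) \<in> {(u, v). u \<in> S \<and> v \<in> S \<and> E u v}\<^sup>*" and s: "s \<in> S"
  shows "\<exists>P\<subseteq>S. s \<in> P \<and> t \<in> P \<and> induced_iso_path E P"
proof -
  have symE: "\<And>x y. E x y \<Longrightarrow> E y x" and irr: "\<And>x. \<not> E x x"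
    using sg unfolding simple_graph_def by blast+
  let ?Q = "\<lambda>k. \<exists>f. walk E S f k \<and> f 0 = s \<and> f k = t"
  have ex: "\<exists>k. ?Q k" using walk_exists[OF st s] by blast
  define k where "k = (LEAST k. ?Q k)"
  have Qk: "?Q k" unfolding k_def using ex by (rule LeastI_ex)
  have mn: "\<And>k'. k' < k \<Longrightarrow> \<not> ?Q k'" unfolding k_def by (rule not_less_Least)
  obtain f where f: "walk E S f k" "f 0 = s" "f k = t" using Qk by blast
  have inj: "f i \<noteq> f j" if "i < j" "j \<le> k" for i j
  proof
    assume eq: "f i = f j"
    have "\<exists>g. walk E S g (k - (j - i)) \<and> g 0 = s \<and> g (k - (j - i)) = t"
    proof (rule walk_shortcut[OF f])
      show "1 \<le> j - i" "i + (j - i) \<le> k" using that by auto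
      show "E (f i) (f (i + (j - i) + 1))" if "i + (j - i) < k"
        using f(1) that eq \<open>i < j\<close> unfolding walk_def by auto
      show "f i = f k" if "i + (j - i) = k" using that eq \<open>i < j\<close> by auto
    qed
    moreover have "k - (j - i) < k" using that by auto
    ultimately show False using mn by blast
  qed
  have noe: "\<not> E (f i) (f j)" if "i + 1 < j" "j \<le> k" for i j
  proof
    assume e: "E (f i) (f j)"
    have "\<exists>g. walk E S g (k - (j - i - 1)) \<and> g 0 = s \<and> g (k - (j - i - 1)) = t"
    proof (rule walk_shortcut[OF f])
      show "1 \<le> j - i - 1" "i + (j - i - 1) \<le> k" using that by auto
      show "E (f i) (f (i + (j - i - 1) + 1))" if "i + (j - i - 1) < k"
      proof -
        have "i + (j - i - 1) + 1 = j" using \<open>i + 1 < j\<close> by linarith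
        then show ?thesis using e by simp
      qed
      show "f i = f k" if "i + (j - i - 1) = k" using that \<open>i + 1 < j\<close> \<open>j \<le> k\<close> by auto
    qed
    moreover have "k - (j - i - 1) < k" using that by auto
    ultimately show False using mn by blast
  qed
  define P where "P = f ` {0..<Suc k}"
  have injon: "inj_on f {0..<Suc k}"
    unfolding inj_on_def
  proof (intro ballI impI)
    fix i j assume ij: "i \<in> {0..<Suc k}" "j \<in> {0..<Suc k}" "f i = f j"
    show "i = j"
    proof (rule ccontr)
      assume "i \<noteq> j"
      then consider "i < j" | "j < i" by linarith
      then show False
      proof cases
        case 1 then show ?thesis using inj[of i j] ij by simp
      next
        case 2 then show ?thesis using inj[of j i] ij by simp
      qed
    qed
  qed
  have cardP: "card P = Suc k" unfolding P_def using card_image[OF injon] by simp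
  have "bij_betw f {0..<Suc k} P" unfolding P_def using injon by (simp add: bij_betw_def)
  then have bij: "bij_betw f {0..<card P} P" by (simp only: cardP)
  have edges: "E (f i) (f j) \<longleftrightarrow> path_edge i j" if "i < card P" "j < card P" for i j
  proof
    assume e: "E (f i) (f j)"
    have ik: "i \<le> k" "j \<le> k" using that cardP by auto
    consider "i + 1 < j" | "j + 1 < i" | "i = j" | "path_edge i j" unfolding path_edge_def by linarith
    then show "path_edge i j"
    proof cases
      case 1 then show ?thesis using noe ik e by blast
    next
      case 2 then show ?thesis using noe ik symE[OF e] by blast
    next
      case 3 then show ?thesis using irr e by blast
    qed
  next
    assume "path_edge i j"
    then consider "j = Suc i" | "i = Suc j" unfolding path_edge_def by linarith
    then show "E (f i) (f j)"
    proof cases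
      case 1 then show ?thesis using f(1) that cardP unfolding walk_def by auto
    next
      case 2 then show ?thesis using f(1) that cardP symE unfolding walk_def by auto
    qed
  qed
  have "induced_iso_path E P" unfolding induced_iso_path_def using bij edges by blast
  moreover have "P \<subseteq> S" using f(1) unfolding P_def walk_def by auto
  moreover have "s \<in> P" "t \<in> P" using f unfolding P_def by force+
  ultimately show ?thesis by blast
qed

lemma path_connected_set:
  assumes sg: "simple_graph E" and P: "induced_iso_path E P" "P \<noteq> {}"
  shows "induced_connected E P"
proof -
  have symE: "\<And>x y. E x y \<Longrightarrow> E y x"
    using sg unfolding simple_graph_def by blast
  let ?R = "{(u, v). u \<in> P \<and> v \<in> P \<and> E u v}"
  obtain f where f: "bij_betw f {0..<card P} P"
    "\<forall>i<card P. \<forall>j<card P. E (f i) (f j) \<longleftrightarrow> path_edge i j"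
    using P unfolding induced_iso_path_def by blast
  have fP: "i < card P \<Longrightarrow> f i \<in> P" for i using bij_betw_apply[OF f(1)] by auto
  have ch: "(f i, f j) \<in> ?R\<^sup>* \<and> (f j, f i) \<in> ?R\<^sup>*" if "i \<le> j" "j < card P" for i j
    using that
  proof (induction j)
    case 0 then show ?case by simp
  next
    case (Suc j)
    show ?case
    proof (cases "i = Suc j")
      case True then show ?thesis by simp
    next
      case False
      then have ij: "i \<le> j" "j < card P" using Suc.prems by auto
      have e: "E (f j) (f (Suc j))" using f(2) Suc.prems unfolding path_edge_def by auto
      have r1: "(f j, f (Suc j)) \<in> ?R" using e fP ij Suc.prems by auto
      have r2: "(f (Suc j), f j) \<in> ?R" using symE[OF e] fP ij Suc.prems by auto
      show ?thesis using Suc.IH[OF ij] r1 r2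
        by (meson converse_rtrancl_into_rtrancl rtrancl.rtrancl_into_rtrancl)
    qed
  qed
  show ?thesis unfolding induced_connected_def
  proof (intro conjI ballI)
    show "P \<noteq> {}" by (rule P(2))
    fix x y assume "x \<in> P" "y \<in> P"
    moreover have im: "f ` {0..<card P} = P" using f(1) unfolding bij_betw_def by blast
    ultimately obtain i j where "i < card P" "j < card P" "x = f i" "y = f j"
      by (metis atLeastLessThan_iff imageE)
    then show "(x, y) \<in> ?R\<^sup>*" using ch by (cases "i \<le> j") (auto simp: not_le less_imp_le)
  qed
qed

theorem mainTheorem6:
  fixes E :: "'n::finite \<Rightarrow> 'n \<Rightarrow> bool" and m :: nat
  assumes "simple_graph E" and "graph_connected E" and "m \<ge> 1"
  shows "normal_fan (Q_conn E m) = normal_fan (Q_path E m)"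
proof -
  define Ic where "Ic = {S :: 'n set. S \<noteq> {} \<and> card S \<le> m + 1 \<and> induced_connected E S}"
  define Ip where "Ip = {S :: 'n set. S \<noteq> {} \<and> card S \<le> m + 1 \<and> induced_iso_path E S}"
  have Qc: "Q_conn E m = minkowski_sum Ic simplex_of" unfolding Q_conn_def Ic_def ..
  have Qp: "Q_path E m = minkowski_sum Ip simplex_of" unfolding Q_path_def Ip_def ..
  have fin: "finite Ic" "finite Ip" by simp_all
  have hmc: "\<forall>S\<in>Ic. hasmax (simplex_of S)" using simplex_hasmax unfolding Ic_def by blast
  have hmp: "\<forall>S\<in>Ip. hasmax (simplex_of S)" using simplex_hasmax unfolding Ip_def by blast
  let ?C = "\<lambda>w w' S. \<forall>s\<in>S. (\<forall>t\<in>S. w$t \<le> w$s) \<longrightarrow> (\<forall>t\<in>S. w'$t \<le> w'$s)"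
  have mc: "mx (minkowski_sum Ic simplex_of) w \<subseteq> mx (minkowski_sum Ic simplex_of) w' \<longleftrightarrow> (\<forall>S\<in>Ic. ?C w w' S)"
    for w w' :: "real ^ 'n"
  proof -
    have "mx (minkowski_sum Ic simplex_of) w \<subseteq> mx (minkowski_sum Ic simplex_of) w' \<longleftrightarrow> (\<forall>S\<in>Ic. mx (simplex_of S) w \<subseteq> mx (simplex_of S) w')"
      by (rule msum_mx[OF fin(1) hmc])
    also have "\<dots> \<longleftrightarrow> (\<forall>S\<in>Ic. ?C w w' S)"
    proof (rule ball_cong[OF refl])
      fix S assume "S \<in> Ic" then have "S \<noteq> {}" unfolding Ic_def by blast
      then show "mx (simplex_of S) w \<subseteq> mx (simplex_of S) w' \<longleftrightarrow> ?C w w' S" by (rule simplex_mx)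
    qed
    finally show ?thesis .
  qed
  have mp: "mx (minkowski_sum Ip simplex_of) w \<subseteq> mx (minkowski_sum Ip simplex_of) w' \<longleftrightarrow> (\<forall>S\<in>Ip. ?C w w' S)"
    for w w' :: "real ^ 'n"
  proof -
    have "mx (minkowski_sum Ip simplex_of) w \<subseteq> mx (minkowski_sum Ip simplex_of) w' \<longleftrightarrow> (\<forall>S\<in>Ip. mx (simplex_of S) w \<subseteq> mx (simplex_of S) w')"
      by (rule msum_mx[OF fin(2) hmp])
    also have "\<dots> \<longleftrightarrow> (\<forall>S\<in>Ip. ?C w w' S)"
    proof (rule ball_cong[OF refl])
      fix S assume "S \<in> Ip" then have "S \<noteq> {}" unfolding Ip_def by blast
      then show "mx (simplex_of S) w \<subseteq> mx (simplex_of S) w' \<longleftrightarrow> ?C w w' S" by (rule simplex_mx)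
    qed
    finally show ?thesis .
  qed
  have sub: "Ip \<subseteq> Ic" unfolding Ip_def Ic_def using path_connected_set[OF assms(1)] by blast
  have comb: "(\<forall>S\<in>Ic. ?C w w' S) \<longleftrightarrow> (\<forall>S\<in>Ip. ?C w w' S)" for w w' :: "real ^ 'n"
  proof
    assume "\<forall>S\<in>Ic. ?C w w' S" then show "\<forall>S\<in>Ip. ?C w w' S" using sub by blast
  next
    assume H: "\<forall>S\<in>Ip. ?C w w' S"
    show "\<forall>S\<in>Ic. ?C w w' S"
    proof (intro ballI impI)
      fix S s t assume S: "S \<in> Ic" and s: "s \<in> S" and ms: "\<forall>t\<in>S. w$t \<le> w$s" and t: "t \<in> S"
      have "(s, t) \<in> {(u, v). u \<in> S \<and> v \<in> S \<and> E u v}\<^sup>*"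
        using S s t unfolding Ic_def induced_connected_def by blast
      then obtain P where P: "P \<subseteq> S" "s \<in> P" "t \<in> P" "induced_iso_path E P"
        using induced_path_exists[OF assms(1) _ s] by blast
      have "card P \<le> card S" using P(1) by (simp add: card_mono)
      then have "P \<in> Ip" using P S unfolding Ip_def Ic_def by auto
      then have "?C w w' P" using H by blast
      moreover have "\<forall>t\<in>P. w$t \<le> w$s" using ms P(1) by blast
      ultimately show "w'$t \<le> w'$s" using P by blast
    qed
  qed
  have "normal_fan (Q_conn E m) = range (\<lambda>w. {w'. mx (minkowski_sum Ic simplex_of) w \<subseteq> mx (minkowski_sum Ic simplex_of) w'})"
    unfolding Qc by (rule fan_char[OF msum_polytope[OF fin(1)] msum_hasmax[OF fin(1) hmc]])
  also have "\<dots> = range (\<lambda>w. {w'. mx (minkowski_sum Ip simplex_of) w \<subseteq> mx (minkowski_sum Ip simplex_of) w'})"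
    using mc mp comb by simp
  also have "\<dots> = normal_fan (Q_path E m)"
    unfolding Qp by (rule fan_char[OF msum_polytope[OF fin(2)] msum_hasmax[OF fin(2) hmp], symmetric])
  finally show ?thesis .
qed

end
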